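(* For all $x\ge 1$ (and $n\ge x$), the $(x,x)$ edge-addition process on $n$ vertices always results in an $(x,x)$ task-dependency graph.
   Context: A task-dependency graph is a finite directed acyclic graph (no loops, no multiple edges). A vertex is initial if it has in-degree $0$ and terminal if it has out-degree $0$ (an isolated vertex is both). An $(x,y)$ task-dependency graph has exactly $x$ initial and exactly $y$ terminal vertices. The $(x,y)$ edge-addition process on $n$ vertices: start with the empty graph on $\{1,\dots,n\}$ and repeatedly add, uniformly at random, an edge $(a,b)$ with $a<b$ not yet present; if an addition would cause fewer than $x$ initial vertices or fewer than $y$ terminal vertices, it is cancelled. The process halts if the graph after some edge addition is an $(x,y)$ task-dependency graph, or if no more edges can be added; the result is the final graph. *)

theory Defs
  imports Main
begin

text \<open>Graphs on the vertex set {1..n}; edges (a,b) with a < b (hence acyclic, no loops,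
no multiple edges since the edge set is a set).\<close>

definition initial_vertices :: "nat \<Rightarrow> (nat \<times> nat) set \<Rightarrow> nat set" where
  "initial_vertices n E = {v \<in> {1..n}. \<not> (\<exists>u. (u, v) \<in> E)}"

definition terminal_vertices :: "nat \<Rightarrow> (nat \<times> nat) set \<Rightarrow> nat set" where
  "terminal_vertices n E = {v \<in> {1..n}. \<not> (\<exists>w. (v, w) \<in> E)}"

definition is_tdg :: "nat \<Rightarrow> nat \<Rightarrow> nat \<Rightarrow> (nat \<times> nat) set \<Rightarrow> bool" where
  "is_tdg x y n E \<longleftrightarrow> card (initial_vertices n E) = x \<and> card (terminal_vertices n E) = y"

definition addable :: "nat \<Rightarrow> nat \<Rightarrow> nat \<Rightarrow> (nat \<times> nat) set \<Rightarrow> nat \<times> nat \<Rightarrow> bool" where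
  "addable x y n E e \<longleftrightarrow> (case e of (a, b) \<Rightarrow>
     1 \<le> a \<and> a < b \<and> b \<le> n \<and> (a, b) \<notin> E \<and>
     x \<le> card (initial_vertices n (insert (a, b) E)) \<and>
     y \<le> card (terminal_vertices n (insert (a, b) E)))"

definition halted :: "nat \<Rightarrow> nat \<Rightarrow> nat \<Rightarrow> (nat \<times> nat) set \<Rightarrow> bool" where
  "halted x y n E \<longleftrightarrow> (E \<noteq> {} \<and> is_tdg x y n E) \<or> \<not> (\<exists>e. addable x y n E e)"

text \<open>Graphs reachable with positive probability in the (x,y) edge-addition process.\<close>
inductive reachable :: "nat \<Rightarrow> nat \<Rightarrow> nat \<Rightarrow> (nat \<times> nat) set \<Rightarrow> bool"
  for x y n where
  start: "reachable x y n {}"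
| step: "reachable x y n E \<Longrightarrow> \<not> halted x y n E \<Longrightarrow> addable x y n E e
          \<Longrightarrow> reachable x y n (insert e E)"

end

theory Submission
  imports Defs
begin

lemma init_insert: "initial_vertices n (insert (a,b) E) = initial_vertices n E - {b}"
  by (auto simp: initial_vertices_def)

lemma term_insert: "terminal_vertices n (insert (a,b) E) = terminal_vertices n E - {a}"
  by (auto simp: terminal_vertices_def)

lemma inv:
  assumes "reachable x y n E" "x \<le> n" "y \<le> n"
  shows "E \<subseteq> {(a,b). 1\<le>a \<and> a<b \<and> b\<le>n} \<and> x \<le> card (initial_vertices n E)
     \<and> y \<le> card (terminal_vertices n E)"
  using assms
proof (induction rule: reachable.induct)
  case start
  have "initial_vertices n {} = {1..n}" "terminal_vertices n {} = {1..n}"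
    by (auto simp: initial_vertices_def terminal_vertices_def)
  then show ?case using start by simp
next
  case (step E e)
  obtain a b where e: "e = (a,b)" by force
  show ?case using step(3) step(4-6) unfolding e addable_def by auto
qed

lemma main:
  assumes wf: "E \<subseteq> {(a,b). 1\<le>a \<and> a<b \<and> b\<le>n}"
    and x1: "x \<ge> 1"
    and cI: "x \<le> card (initial_vertices n E)" and cT: "x \<le> card (terminal_vertices n E)"
    and nt: "\<not> is_tdg x x n E"
  shows "\<exists>e. addable x x n E e"
proof (rule ccontr)
  assume na: "\<not> (\<exists>e. addable x x n E e)"
  define I where "I = initial_vertices n E"
  define T where "T = terminal_vertices n E"
  have IS: "I \<subseteq> {1..n}" "T \<subseteq> {1..n}"
    by (auto simp: I_def T_def initial_vertices_def terminal_vertices_def)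
  have fI: "finite I" "finite T" using IS finite_subset by blast+
  have Imem: "v \<in> I \<longleftrightarrow> v \<in> {1..n} \<and> (\<forall>u. (u,v) \<notin> E)" for v
    by (auto simp: I_def initial_vertices_def)
  have Tmem: "v \<in> T \<longleftrightarrow> v \<in> {1..n} \<and> (\<forall>w. (v,w) \<notin> E)" for v
    by (auto simp: T_def terminal_vertices_def)
  have noadd: "\<not> (x \<le> card (I - {b}) \<and> x \<le> card (T - {a}))"
    if "1\<le>a" "a<b" "b\<le>n" "(a,b)\<notin>E" for a b
    using na that unfolding addable_def init_insert term_insert I_def T_def
    by (metis (no_types, lifting) case_prod_conv)
  have cI': "x \<le> card I" and cT': "x \<le> card T" using cI cT I_def T_def by auto
  have cd: "card (S - {v}) = (if v \<in> S then card S - 1 else card S)" if "finite S" for S and v :: nat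
    by (simp add: card_Diff_singleton_if)
  have nt': "\<not> (card I = x \<and> card T = x)" using nt by (simp add: is_tdg_def I_def T_def)
  consider (A) "card I > x" | (B) "card I = x" "card T > x" using nt' cI' cT' by linarith
  then show False
  proof cases
    case A
    show False
    proof (cases "card T > x")
      case True
      have edges: "(a,b) \<in> E" if "1\<le>a" "a<b" "b\<le>n" for a b
      proof (rule ccontr)
        assume "(a,b) \<notin> E"
        from noadd[OF that this] show False using A True cd[OF fI(1), of b] cd[OF fI(2), of a]
          by (auto split: if_splits)
      qed
      have "I \<subseteq> {1}"
      proof
        fix v assume v: "v \<in> I"
        then have "v \<in> {1..n}" using IS by auto
        moreover have "\<not> (v \<ge> 2)" using edges[of 1 v] v Imem calculation by auto
        ultimately show "v \<in> {1}" by auto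
      qed
      then have "card I \<le> card {1::nat}" by (intro card_mono) auto
      then have "card I \<le> 1" by simp
      then show False using A x1 by linarith
    next
      case False
      then have Tx: "card T = x" using cT' by linarith
      have edges: "(a,b) \<in> E" if "1\<le>a" "a<b" "b\<le>n" "a \<notin> T" for a b
      proof (rule ccontr)
        assume "(a,b) \<notin> E"
        from noadd[OF that(1-3) this] show False using A Tx cd[OF fI(1), of b] cd[OF fI(2), of a] that(4)
          by (auto split: if_splits)
      qed
      show False
      proof (cases "{1..n} - T = {}")
        case True
        then have "T = {1..n}" using IS by auto
        then have "card I \<le> card T" using IS card_mono by (metis finite_atLeastAtMost)
        then show False using A Tx by linarith
      next
        case False
        define a where "a = Min ({1..n} - T)"
        have a: "a \<in> {1..n} - T" unfolding a_def using False by (intro Min_in) auto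
        have amin: "a \<le> v" if "v \<in> {1..n} - T" for v unfolding a_def using that by (intro Min_le) auto
        have "I \<subseteq> {1..a}"
        proof
          fix v assume v: "v \<in> I"
          then have "v \<in> {1..n}" using IS by auto
          moreover have "\<not> (v > a)" using edges[of a v] v Imem a calculation by auto
          ultimately show "v \<in> {1..a}" by auto
        qed
        then have "card I \<le> card {1..a}" by (intro card_mono) auto
        then have c1: "card I \<le> a" by simp
        obtain w where w: "(a,w) \<in> E" using a Tmem by auto
        then have an: "a < n" using wf by auto
        have "insert n {1..<a} \<subseteq> T"
        proof
          fix v assume "v \<in> insert n {1..<a}"
          then show "v \<in> T"
          proof
            assume "v = n" then show ?thesis using Tmem wf an a by auto
          next
            assume v: "v \<in> {1..<a}"
            then show ?thesis using amin[of v] an by auto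
          qed
        qed
        then have "card (insert n {1..<a}) \<le> card T" using fI card_mono by blast
        moreover have "card (insert n {1..<a}) = a" using an a by auto
        ultimately show False using c1 A Tx by linarith
      qed
    qed
  next
    case B
    have edges: "(a,b) \<in> E" if "1\<le>a" "a<b" "b\<le>n" "b \<notin> I" for a b
    proof (rule ccontr)
      assume "(a,b) \<notin> E"
      from noadd[OF that(1-3) this] show False using B cd[OF fI(1), of b] cd[OF fI(2), of a] that(4)
        by (auto split: if_splits)
    qed
    show False
    proof (cases "{1..n} - I = {}")
      case True
      then have "I = {1..n}" using IS by auto
      then have "card T \<le> card I" using IS card_mono by (metis finite_atLeastAtMost)
      then show False using B by linarith
    next
      case False
      define b where "b = Max ({1..n} - I)"
      have b: "b \<in> {1..n} - I" unfolding b_def using False by (intro Max_in) auto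
      have bmax: "v \<le> b" if "v \<in> {1..n} - I" for v unfolding b_def using that by (intro Max_ge) auto
      have "T \<subseteq> {b..n}"
      proof
        fix v assume v: "v \<in> T"
        then have "v \<in> {1..n}" using IS by auto
        moreover have "\<not> (v < b)" using edges[of v b] v Tmem b calculation by auto
        ultimately show "v \<in> {b..n}" by auto
      qed
      then have "card T \<le> card {b..n}" by (intro card_mono) auto
      then have c1: "card T \<le> n + 1 - b" by simp
      obtain u where u: "(u,b) \<in> E" using b Imem by auto
      then have b1: "1 < b" using wf by auto
      have "insert 1 {b<..n} \<subseteq> I"
      proof
        fix v assume "v \<in> insert 1 {b<..n}"
        then show "v \<in> I"
        proof
          assume "v = 1" then show ?thesis using Imem wf b1 b by auto
        next
          assume v: "v \<in> {b<..n}"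
          then show ?thesis using bmax[of v] b1 by auto
        qed
      qed
      then have "card (insert 1 {b<..n}) \<le> card I" using fI card_mono by blast
      moreover have "card (insert 1 {b<..n}) = n + 1 - b" using b1 b by auto
      ultimately show False using c1 B by linarith
    qed
  qed
qed

theorem mainTheorem10:
  fixes x n :: nat and E :: "(nat \<times> nat) set"
  assumes "x \<ge> 1" and "n \<ge> x"
    and "reachable x x n E" and "halted x x n E"
  shows "is_tdg x x n E"
proof -
  note i = inv[OF assms(3) assms(2) assms(2)]
  show ?thesis
  proof (rule ccontr)
    assume "\<not> is_tdg x x n E"
    with main[OF conjunct1[OF i] assms(1)] i have "\<exists>e. addable x x n E e" by blast
    with assms(4) \<open>\<not> is_tdg x x n E\<close> show False by (auto simp: halted_def)
  qed
qed

end
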